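(* Let $S_N$ be the star graph on $N\ge 2$ vertices with center $c$ and leaves $\ell_1,\dots,\ell_{N-1}$, and let $\delta\in[0,1]$. Then for each $i\in\{1,\dots,N-1\}$, $$\mathsf{fp}_{r=1}^{\delta}(S_N,\{\ell_i\})=\frac{1+(1-\delta)(N-2)}{(1-\delta)(N-2)^2+2(N-1)}\quad\text{and}\quad\mathsf{fp}_{r=1}^{\delta}(S_N,\{c\})=\frac{1+\delta(N-2)}{(1-\delta)(N-2)^2+2(N-1)}.$$
   Context: Mixed $\delta$-updating on an undirected unweighted graph $G=(V,E)$: each vertex holds a mutant (fitness $r$) or wild-type (fitness $1$); $f_S(u)$ is the fitness at $u$ when $S$ is the mutant set. At each step, with probability $\delta$ a death-Birth step: choose $v$ uniformly to die, choose a neighbor $u$ of $v$ with probability proportional to $f_S(u)$, $u$ copies its type onto $v$; with probability $1-\delta$ a Birth-death step: choose $u$ with probability proportional to $f_S(u)$ among all vertices, choose a uniformly random neighbor $v$ of $u$, $u$ copies its type onto $v$. $\mathsf{fp}_r^\delta(G,S_0)$ is the probability that all vertices eventually become mutant from initial mutant set $S_0$. *)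

theory Defs
  imports Complex_Main
begin

text \<open>Undirected unweighted graphs are given by a finite vertex set V and a symmetric,
irreflexive adjacency relation E.  A state of the process is the set S of mutant vertices.\<close>

definition fit :: "real \<Rightarrow> 'a set \<Rightarrow> 'a \<Rightarrow> real" where
  "fit r S u = (if u \<in> S then r else 1)"

definition nbrs :: "'a set \<Rightarrow> ('a \<Rightarrow> 'a \<Rightarrow> bool) \<Rightarrow> 'a \<Rightarrow> 'a set" where
  "nbrs V E v = {u \<in> V. E v u}"

definition copy_to :: "'a set \<Rightarrow> 'a \<Rightarrow> 'a \<Rightarrow> 'a set" where
  "copy_to S u v = (if u \<in> S then insert v S else S - {v})"

text \<open>absorb V E r d n S = probability that after n steps of mixed d-updating, started
from mutant set S, all vertices are mutants (one-step analysis / backward equation).\<close>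
fun absorb :: "'a set \<Rightarrow> ('a \<Rightarrow> 'a \<Rightarrow> bool) \<Rightarrow> real \<Rightarrow> real \<Rightarrow> nat \<Rightarrow> 'a set \<Rightarrow> real" where
  "absorb V E r d 0 S = (if S = V then 1 else 0)"
| "absorb V E r d (Suc n) S =
     d * (\<Sum>v\<in>V. (1 / real (card V)) *
            (\<Sum>u\<in>nbrs V E v. (fit r S u / (\<Sum>w\<in>nbrs V E v. fit r S w)) *
                 absorb V E r d n (copy_to S u v)))
   + (1 - d) * (\<Sum>u\<in>V. (fit r S u / (\<Sum>w\<in>V. fit r S w)) *
            (\<Sum>v\<in>nbrs V E u. (1 / real (card (nbrs V E u))) *
                 absorb V E r d n (copy_to S u v)))"

text \<open>Fixation probability: probability of eventually reaching the all-mutant state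
(which is absorbing), i.e. the limit of the n-step absorption probabilities.\<close>
definition fp :: "'a set \<Rightarrow> ('a \<Rightarrow> 'a \<Rightarrow> bool) \<Rightarrow> real \<Rightarrow> real \<Rightarrow> 'a set \<Rightarrow> real" where
  "fp V E r d S0 = lim (\<lambda>n. absorb V E r d n S0)"

definition star_V :: "nat \<Rightarrow> nat set" where
  "star_V N = {0..<N}"

definition star_E :: "nat \<Rightarrow> nat \<Rightarrow> bool" where
  "star_E u v = (u \<noteq> v \<and> (u = 0 \<or> v = 0))"

end

theory Submission
  imports Defs
begin

locale SC =
  fixes N :: nat and d :: real
  assumes N2: "N \<ge> 2" and d0: "0 \<le> d" and d1: "d \<le> 1"
begin

definition "lv = {1..<N}"
definition "Lr = real N - 1"
definition "w0 = 1 + d * (real N - 2)"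
definition "wl = 1 + (1 - d) * (real N - 2)"
definition "ca = wl / (real N * Lr)"
definition "cb = w0 / (real N * Lr)"
definition "P g S = ca * (\<Sum>u\<in>lv. g (copy_to S u 0)) + cb * (\<Sum>v\<in>lv. g (copy_to S 0 v))"

lemma V_eq: "star_V N = insert 0 lv" and lv0: "0 \<notin> lv" and fin_lv: "finite lv"
  using N2 by (auto simp: star_V_def lv_def)

lemma sumV: "(\<Sum>v\<in>star_V N. h v) = h 0 + (\<Sum>v\<in>lv. h v)"
  using V_eq lv0 fin_lv by simp

lemma card_lv: "real (card lv) = Lr"
  using N2 by (simp add: lv_def Lr_def of_nat_diff)

lemma nbrs0: "nbrs (star_V N) star_E 0 = lv"
  using N2 by (auto simp: nbrs_def star_V_def star_E_def lv_def)

lemma nbrsl: "v \<in> lv \<Longrightarrow> nbrs (star_V N) star_E v = {0}"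
  using N2 by (auto simp: nbrs_def star_V_def star_E_def lv_def)

lemma Lr_pos: "Lr \<ge> 1" using N2 by (simp add: Lr_def)
lemma w0_pos: "w0 \<ge> 1" using N2 d0 by (simp add: w0_def)
lemma wl_pos: "wl \<ge> 1" using N2 d1 by (simp add: wl_def)
lemma ca_pos: "ca > 0" using Lr_pos wl_pos N2 by (simp add: ca_def)
lemma cb_pos: "cb > 0" using Lr_pos w0_pos N2 by (simp add: cb_def)
lemma cacb: "ca * Lr + cb * Lr = 1"
proof -
  have "w0 + wl = real N" by (simp add: w0_def wl_def algebra_simps)
  then show ?thesis using Lr_pos N2 by (simp add: ca_def cb_def field_simps)
qed
lemma cw: "ca * w0 = cb * wl" by (simp add: ca_def cb_def)

lemma absorb_Suc:
  "absorb (star_V N) star_E 1 d (Suc n) S = P (absorb (star_V N) star_E 1 d n) S"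
proof -
  let ?g = "absorb (star_V N) star_E 1 d n"
  define A where "A = (\<Sum>u\<in>lv. ?g (copy_to S u 0))"
  define B where "B = (\<Sum>v\<in>lv. ?g (copy_to S 0 v))"
  have f1: "\<And>u. fit 1 S u = 1" by (simp add: fit_def)
  have cV: "card (star_V N) = N" by (simp add: star_V_def)
  have "absorb (star_V N) star_E 1 d (Suc n) S =
     d * (1 / real N * (A / Lr) + B / real N) + (1 - d) * (1 / real N * (B / Lr) + A / real N)"
    using fin_lv lv0
    by (simp add: f1 cV sumV nbrs0 nbrsl card_lv sum.insert A_def B_def
         sum_divide_distrib[symmetric] sum_distrib_left[symmetric] cong: sum.cong)
  also have "\<dots> = P ?g S"
  proof -
    have w0L: "w0 = 1 - d + d * Lr" and wlL: "wl = d + (1 - d) * Lr"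
      by (simp_all add: w0_def wl_def Lr_def algebra_simps)
    have "Lr \<noteq> 0" "real N \<noteq> 0" using Lr_pos N2 by auto
    then show ?thesis
      unfolding P_def A_def[symmetric] B_def[symmetric] ca_def cb_def w0L wlL
      by (simp add: field_simps)
  qed
  finally show ?thesis .
qed


declare absorb.simps(2)[simp del]

abbreviation "ab n \<equiv> absorb (star_V N) star_E 1 d n"

lemma lv_sub: "lv \<subseteq> star_V N" using V_eq by auto
lemma zero_V: "0 \<in> star_V N" using V_eq by auto

lemma copy_sub: "S \<subseteq> star_V N \<Longrightarrow> v \<in> star_V N \<Longrightarrow> copy_to S u v \<subseteq> star_V N"
  by (auto simp: copy_to_def)

lemma P_const_like:
  assumes "\<And>u. u \<in> lv \<Longrightarrow> g (copy_to S u 0) = c" "\<And>u. u \<in> lv \<Longrightarrow> g (copy_to S 0 u) = c"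
  shows "P g S = c"
proof -
  have "P g S = ca * (\<Sum>u\<in>lv. c) + cb * (\<Sum>u\<in>lv. c)"
    unfolding P_def using assms by (simp cong: sum.cong)
  also have "\<dots> = (ca * Lr + cb * Lr) * c" by (simp add: card_lv algebra_simps)
  finally show ?thesis using cacb by simp
qed

lemma P_mono:
  assumes "\<And>T. T \<subseteq> star_V N \<Longrightarrow> g T \<le> h T" "S \<subseteq> star_V N"
  shows "P g S \<le> P h S"
  unfolding P_def
  apply (intro add_mono mult_left_mono sum_mono assms(1) copy_sub assms(2))
  using ca_pos cb_pos lv_sub zero_V by auto

lemma P_V: "P g (star_V N) = g (star_V N)"
  by (rule P_const_like) (use lv_sub zero_V in \<open>auto simp: copy_to_def insert_absorb\<close>)

lemma P_empty: "P g {} = g {}"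
  by (rule P_const_like) (auto simp: copy_to_def)

lemma ab_V: "ab n (star_V N) = 1"
  by (induction n) (simp_all only: absorb_Suc P_V, simp)

lemma ab_empty: "ab n {} = 0"
  using N2 by (induction n) (simp_all only: absorb_Suc P_empty, simp add: star_V_def)

lemma ab_bounds: "S \<subseteq> star_V N \<Longrightarrow> 0 \<le> ab n S \<and> ab n S \<le> 1"
proof (induction n arbitrary: S)
  case 0 then show ?case by simp
next
  case (Suc n)
  have "P (\<lambda>_. 0) S \<le> P (ab n) S" by (rule P_mono) (use Suc in auto)
  moreover have "P (ab n) S \<le> P (\<lambda>_. 1) S" by (rule P_mono) (use Suc in auto)
  moreover have "P (\<lambda>_. 0) S = 0" "P (\<lambda>_. 1) S = 1" by (rule P_const_like, simp, simp)+
  ultimately show ?case by (simp add: absorb_Suc)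
qed

lemma ab_mono: "S \<subseteq> star_V N \<Longrightarrow> ab n S \<le> ab (Suc n) S"
proof (induction n arbitrary: S)
  case 0
  show ?case
  proof (cases "S = star_V N")
    case True then show ?thesis using ab_V by simp
  next
    case False then show ?thesis using ab_bounds[OF 0, of 1] by simp
  qed
next
  case (Suc n)
  have "P (ab n) S \<le> P (ab (Suc n)) S"
    by (rule P_mono) (use Suc in auto)
  then show ?case by (simp only: absorb_Suc)
qed

definition "Lf S = lim (\<lambda>n. ab n S)"

lemma ab_lim: assumes "S \<subseteq> star_V N" shows "(\<lambda>n. ab n S) \<longlonglongrightarrow> Lf S"
proof -
  have "incseq (\<lambda>n. ab n S)" by (rule incseq_SucI) (use ab_mono assms in auto)
  moreover have "\<forall>i. ab i S \<le> 1" using ab_bounds assms by auto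
  ultimately obtain L where "(\<lambda>n. ab n S) \<longlonglongrightarrow> L" by (rule incseq_convergent)
  then show ?thesis unfolding Lf_def by (simp add: limI)
qed

lemma Lf_harm: assumes "S \<subseteq> star_V N" shows "P Lf S = Lf S"
proof -
  have "(\<lambda>n. ab (Suc n) S) \<longlonglongrightarrow> Lf S" using ab_lim[OF assms] by (rule LIMSEQ_Suc)
  moreover have "(\<lambda>n. ab (Suc n) S) \<longlonglongrightarrow> P Lf S"
    unfolding absorb_Suc P_def
    by (intro tendsto_intros ab_lim copy_sub assms) (use lv_sub zero_V in auto)
  ultimately show ?thesis using LIMSEQ_unique by blast
qed

lemma Lf_V: "Lf (star_V N) = 1"
proof -
  have "(\<lambda>n. 1::real) \<longlonglongrightarrow> Lf (star_V N)" using ab_lim[of "star_V N"] ab_V by simp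
  from LIMSEQ_unique[OF this tendsto_const] show ?thesis .
qed

lemma Lf_empty: "Lf {} = 0"
proof -
  have "(\<lambda>n. 0::real) \<longlonglongrightarrow> Lf {}" using ab_lim[of "{}"] ab_empty by simp
  from LIMSEQ_unique[OF this tendsto_const] show ?thesis .
qed

lemma maxp:
  assumes harm: "\<And>S. S \<subseteq> star_V N \<Longrightarrow> P g S = g S" and gV: "g (star_V N) = 0"
    and ge: "g {} = 0" and S: "S \<subseteq> star_V N"
  shows "g S \<le> 0"
proof -
  define M where "M = Max (g ` Pow (star_V N))"
  have finP: "finite (g ` Pow (star_V N))" by (simp add: star_V_def)
  have leM: "g T \<le> M" if "T \<subseteq> star_V N" for T
    unfolding M_def using finP that by (intro Max_ge) auto
  have "M \<in> g ` Pow (star_V N)" unfolding M_def using finP by (intro Max_in) auto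
  then obtain S0 where S0: "S0 \<subseteq> star_V N" "g S0 = M" by auto
  have key: "g (copy_to T 0 v) = M" if T: "T \<subseteq> star_V N" "g T = M" and v: "v \<in> lv" for T v
  proof -
    let ?A = "\<Sum>u\<in>lv. g (copy_to T u 0)"
    let ?B = "\<Sum>u\<in>lv. g (copy_to T 0 u)"
    have "?A \<le> (\<Sum>u\<in>lv. M)" by (intro sum_mono leM copy_sub T zero_V)
    then have A: "?A \<le> Lr * M" by (simp add: card_lv)
    have "?B \<le> (\<Sum>u\<in>lv. M)" by (intro sum_mono leM copy_sub T) (use lv_sub in auto)
    have eq: "ca * ?A + cb * ?B = M" using harm[OF T(1)] T(2) unfolding P_def by simp
    have "ca * ?A \<le> ca * (Lr * M)" using A ca_pos by (intro mult_left_mono) auto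
    moreover have "cb * (Lr * M) = M - ca * (Lr * M)"
    proof -
      have "cb * (Lr * M) = (cb * Lr) * M" by simp
      also have "\<dots> = (1 - ca * Lr) * M"
      proof -
        have e: "cb * Lr = 1 - ca * Lr" using cacb by linarith
        show ?thesis by (simp only: e)
      qed
      finally show ?thesis by (simp add: algebra_simps)
    qed
    ultimately have "cb * ?B \<ge> cb * (Lr * M)" using eq by linarith
    then have "?B \<ge> Lr * M" using cb_pos by simp
    then have "(\<Sum>u\<in>lv. M - g (copy_to T 0 u)) \<le> 0"
      by (simp add: sum_subtractf card_lv)
    moreover have "\<And>u. u \<in> lv \<Longrightarrow> 0 \<le> M - g (copy_to T 0 u)"
      using leM copy_sub T lv_sub by auto
    ultimately have "(\<Sum>u\<in>lv. M - g (copy_to T 0 u)) = 0"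
      by (meson antisym sum_nonneg)
    then have "\<forall>u\<in>lv. M - g (copy_to T 0 u) = 0"
      using sum_nonneg_eq_0_iff[OF fin_lv] leM copy_sub T lv_sub by (smt (verit, best) subset_iff)
    then show ?thesis using v by auto
  qed
  have M0: "M = 0"
  proof (cases "0 \<in> S0")
    case True
    have "F \<subseteq> lv \<Longrightarrow> g (S0 \<union> F) = M" if "finite F" for F
      using that
    proof (induction F rule: finite_induct)
      case empty then show ?case using S0 by simp
    next
      case (insert x F)
      have "S0 \<union> insert x F = copy_to (S0 \<union> F) 0 x" using True by (auto simp: copy_to_def)
      moreover have "S0 \<union> F \<subseteq> star_V N" using insert S0 lv_sub by auto
      ultimately show ?case using key insert by auto
    qed
    from this[OF fin_lv] have "g (S0 \<union> lv) = M" by simp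
    moreover have "S0 \<union> lv = star_V N" using V_eq S0 True by auto
    ultimately show ?thesis using gV by simp
  next
    case False
    have "F \<subseteq> lv \<Longrightarrow> g (S0 - F) = M" if "finite F" for F
      using that
    proof (induction F rule: finite_induct)
      case empty then show ?case using S0 by simp
    next
      case (insert x F)
      have "S0 - insert x F = copy_to (S0 - F) 0 x" using False by (auto simp: copy_to_def)
      moreover have "S0 - F \<subseteq> star_V N" using insert S0 lv_sub by auto
      ultimately show ?case using key insert by auto
    qed
    from this[OF fin_lv] have "g (S0 - lv) = M" by simp
    moreover have "S0 - lv = {}" using V_eq S0 False by auto
    ultimately show ?thesis using ge by simp
  qed
  show ?thesis using leM[OF S] M0 by simp
qed

lemma P_diff: "P (\<lambda>T. g T - h T) S = P g S - P h S"
  unfolding P_def by (simp add: sum_subtractf algebra_simps)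

lemma P_div: "P (\<lambda>T. g T / c) S = P g S / c"
  unfolding P_def by (simp add: sum_divide_distrib[symmetric] algebra_simps add_divide_distrib)

lemma P_neg: "P (\<lambda>T. - g T) S = - P g S"
  unfolding P_def by (simp add: sum_negf algebra_simps)

lemma P_minus: "P g S - g S = (\<Sum>u\<in>lv. ca * (g (copy_to S u 0) - g S) + cb * (g (copy_to S 0 u) - g S))"
proof -
  have "(\<Sum>u\<in>lv. ca * (g (copy_to S u 0) - g S) + cb * (g (copy_to S 0 u) - g S))
     = P g S - (ca * Lr + cb * Lr) * g S"
    unfolding P_def by (simp add: sum.distrib sum_subtractf sum_distrib_left[symmetric] card_lv algebra_simps)
  then show ?thesis using cacb by simp
qed

definition "sig S = (\<Sum>x\<in>S. if x = 0 then w0 else wl)"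

lemma sig_harm: assumes S: "S \<subseteq> star_V N" shows "P sig S = sig S"
proof -
  have finS: "finite S" using S finite_subset by (auto simp: star_V_def)
  have "(\<Sum>u\<in>lv. ca * (sig (copy_to S u 0) - sig S) + cb * (sig (copy_to S 0 u) - sig S)) = 0"
  proof (rule sum.neutral, rule ballI)
    fix u assume u: "u \<in> lv"
    then have u0: "u \<noteq> 0" using lv0 by metis
    show "ca * (sig (copy_to S u 0) - sig S) + cb * (sig (copy_to S 0 u) - sig S) = 0"
    proof (cases "0 \<in> S"; cases "u \<in> S")
      assume a: "0 \<in> S" "u \<in> S"
      then show ?thesis by (simp add: copy_to_def insert_absorb)
    next
      assume a: "0 \<in> S" "u \<notin> S"
      have "sig (S - {0}) = sig S - w0" unfolding sig_def by (subst sum_diff1[OF finS]) (use a in simp)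
      moreover have "sig (insert u S) = sig S + wl" unfolding sig_def using a finS u0 by simp
      ultimately have "sig (copy_to S u 0) - sig S = - w0" "sig (copy_to S 0 u) - sig S = wl"
        using a by (simp_all add: copy_to_def)
      then show ?thesis using cw by simp
    next
      assume a: "0 \<notin> S" "u \<in> S"
      have "sig (S - {u}) = sig S - wl" unfolding sig_def using a finS u0 by (simp add: sum_diff1)
      moreover have "sig (insert 0 S) = sig S + w0" unfolding sig_def using a finS by simp
      ultimately have "sig (copy_to S u 0) - sig S = w0" "sig (copy_to S 0 u) - sig S = - wl"
        using a by (simp_all add: copy_to_def)
      then show ?thesis using cw by simp
    next
      assume a: "0 \<notin> S" "u \<notin> S"
      then show ?thesis by (simp add: copy_to_def)
    qed
  qed
  then show ?thesis using P_minus[of sig S] by simp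
qed

definition "Z = w0 + Lr * wl"
lemma Z_pos: "Z > 0" using w0_pos wl_pos Lr_pos by (simp add: Z_def add_pos_pos)

lemma sig_V: "sig (star_V N) = Z"
proof -
  have "(\<Sum>x\<in>lv. if x = 0 then w0 else wl) = (\<Sum>x\<in>lv. wl)"
    by (rule sum.cong) (use lv0 in auto)
  then show ?thesis unfolding sig_def Z_def V_eq using lv0 fin_lv by (simp add: card_lv)
qed

lemma Lf_eq: assumes S: "S \<subseteq> star_V N" shows "Lf S = sig S / Z"
proof -
  define D where "D T = Lf T - sig T / Z" for T
  have harm: "P D T = D T" if "T \<subseteq> star_V N" for T
    unfolding D_def P_diff P_div using Lf_harm sig_harm that by simp
  have DV: "D (star_V N) = 0" unfolding D_def using Lf_V sig_V Z_pos by simp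
  have De: "D {} = 0" unfolding D_def using Lf_empty by (simp add: sig_def)
  have "D S \<le> 0" by (rule maxp[OF harm DV De S])
  moreover have "- D S \<le> 0"
    by (rule maxp[of "\<lambda>T. - D T"]) (use harm DV De S P_neg in auto)
  ultimately show ?thesis unfolding D_def by simp
qed

lemma fp_eq: assumes "S \<subseteq> star_V N" shows "fp (star_V N) star_E 1 d S = sig S / Z"
  using Lf_eq[OF assms] unfolding fp_def Lf_def by simp

end

theorem mainTheorem6:
  fixes N :: nat and d :: real and i :: nat
  assumes "N \<ge> 2" and "0 \<le> d" and "d \<le> 1" and "1 \<le> i" and "i \<le> N - 1"
  shows "fp (star_V N) star_E 1 d {i} =
           (1 + (1 - d) * (real N - 2)) / ((1 - d) * (real N - 2)^2 + 2 * (real N - 1))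
       \<and> fp (star_V N) star_E 1 d {0} =
           (1 + d * (real N - 2)) / ((1 - d) * (real N - 2)^2 + 2 * (real N - 1))"
proof -
  interpret SC N d using assms by unfold_locales auto
  have Zeq: "Z = (1 - d) * (real N - 2)^2 + 2 * (real N - 1)"
    unfolding Z_def w0_def wl_def Lr_def by (simp add: algebra_simps power2_eq_square)
  have i: "{i} \<subseteq> star_V N" "i \<noteq> 0" using assms by (auto simp: star_V_def)
  have z: "{0} \<subseteq> star_V N" using assms by (auto simp: star_V_def)
  show ?thesis
    using fp_eq[OF i(1)] fp_eq[OF z] i(2) unfolding Zeq by (simp add: sig_def w0_def wl_def)
qed

end
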